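(* Let $m\ge2$ be an integer and let $\omega\in\mathbb{R}^d$ with $\nu(\omega;\sigma)<\infty$ for some $\sigma>md$. Then Lebesgue-almost every point of the unit circle $\{|\lambda|=1\}$ is $m$-tangentially accessible for the set $\bigcup_{A>0}\Upsilon(A;\omega,\sigma)$. More precisely, for every $\eta>0$ there is $A>0$ such that the set of points of the unit circle that are $m$-tangentially accessible for $\Upsilon(A;\omega,\sigma)$ has complement in the unit circle of one-dimensional Lebesgue measure less than $\eta$.
   Context: $|k|=\sum_i|k_i|$; $\nu(\omega;\sigma)=\sup_{k\in\mathbb{Z}^d\setminus\{0\}}|e^{2\pi ik\cdot\omega}-1|^{-1}|k|^{-\sigma}$; $\nu(\lambda;\omega,\sigma)=\sup_{k\in\mathbb{Z}^d\setminus\{0\}}|e^{2\pi ik\cdot\omega}-\lambda|^{-1}|k|^{-\sigma}$. $\Upsilon(A;\omega,\sigma)=\{\lambda\in\mathbb{C}:\nu(\lambda;\omega,\sigma)\le A\}$, i.e. the complement of $\bigcup_{k\ne0}\{\lambda:|e^{2\pi ik\cdot\omega}-\lambda|<A^{-1}|k|^{-\sigma}\}$. Tangential accessibility: a point $\lambda_0$ is $m$-tangentially accessible for a set $\mathcal{C}\subseteq\mathbb{C}$ if there exist a unit complex number $u$ and $\delta>0$, $\gamma>0$ such that $\{\lambda_0+(t+is)u:\ |t|,|s|<\delta,\ s\ge\gamma|t|^m\}\subseteq\mathcal{C}$. *)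

theory Defs
  imports "HOL-Analysis.Analysis"
begin

definition l1norm :: "int ^ 'd \<Rightarrow> real" where
  "l1norm k = (\<Sum>i\<in>UNIV. real_of_int \<bar>k $ i\<bar>)"

definition kdot :: "int ^ 'd \<Rightarrow> real ^ 'd \<Rightarrow> real" where
  "kdot k w = (\<Sum>i\<in>UNIV. real_of_int (k $ i) * w $ i)"

definition nu_lam :: "complex \<Rightarrow> real ^ 'd \<Rightarrow> real \<Rightarrow> ereal" where
  "nu_lam lam w \<sigma> =
     (SUP k\<in>{k :: int ^ 'd. k \<noteq> 0}.
        (let z = cmod (exp (complex_of_real (2 * pi * kdot k w) * \<i>) - lam)
         in if z = 0 then \<infinity> else ereal (1 / (z * l1norm k powr \<sigma>))))"

definition nu_omega :: "real ^ 'd \<Rightarrow> real \<Rightarrow> ereal" where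
  "nu_omega w \<sigma> = nu_lam 1 w \<sigma>"

definition Upsilon :: "real \<Rightarrow> real ^ 'd \<Rightarrow> real \<Rightarrow> complex set" where
  "Upsilon A w \<sigma> = {lam. nu_lam lam w \<sigma> \<le> ereal A}"

definition tang_accessible :: "nat \<Rightarrow> complex set \<Rightarrow> complex \<Rightarrow> bool" where
  "tang_accessible m C lam0 \<longleftrightarrow>
     (\<exists>u \<delta> \<gamma>. cmod u = 1 \<and> \<delta> > 0 \<and> \<gamma> > 0 \<and>
        {lam0 + (complex_of_real t + \<i> * complex_of_real s) * u | t s.
            \<bar>t\<bar> < \<delta> \<and> \<bar>s\<bar> < \<delta> \<and> s \<ge> \<gamma> * \<bar>t\<bar> ^ m} \<subseteq> C)"

end

theory Submission
  imports Defs "HOL-Analysis.Infinite_Set_Sum"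
begin
no_notation Infinite_Sum.abs_summable_on (infixr \<open>abs'_summable'_on\<close> 46)


lemma cos_ge_quad: fixes x::real assumes "x \<ge> 0" shows "1 - x\<^sup>2/2 \<le> cos x"
proof -
  let ?f = "\<lambda>x. cos x - 1 + x\<^sup>2/2"
  have "\<And>u. \<lbrakk>0 \<le> u; u \<le> x\<rbrakk> \<Longrightarrow> (?f has_real_derivative u - sin u) (at u)"
    by (auto intro!: derivative_eq_intros simp: field_simps power2_eq_square)
  moreover have "\<And>u. \<lbrakk>0 \<le> u; u \<le> x\<rbrakk> \<Longrightarrow> 0 \<le> u - sin u" using sin_x_le_x by auto
  ultimately have "?f x \<ge> ?f 0"
    by (intro DERIV_nonneg_imp_nondecreasing [OF assms]) blast
  then show ?thesis by simp
qed

lemma sin_ge_cubic: fixes x::real assumes "x \<ge> 0" shows "x - x^3/6 \<le> sin x"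
proof -
  let ?f = "\<lambda>x. sin x - x + x^3/6"
  have "\<And>u. \<lbrakk>0 \<le> u; u \<le> x\<rbrakk> \<Longrightarrow> (?f has_real_derivative cos u - 1 + u\<^sup>2/2) (at u)"
    by (auto intro!: derivative_eq_intros simp: field_simps power2_eq_square)
  moreover have "\<And>u. \<lbrakk>0 \<le> u; u \<le> x\<rbrakk> \<Longrightarrow> 0 \<le> cos u - 1 + u\<^sup>2/2" using cos_ge_quad by force
  ultimately have "?f x \<ge> ?f 0"
    by (intro DERIV_nonneg_imp_nondecreasing [OF assms]) blast
  then show ?thesis by simp
qed

lemma cos_le_quart0: fixes x::real assumes "x \<ge> 0" shows "cos x \<le> 1 - x\<^sup>2/2 + x^4/24"
proof -
  let ?f = "\<lambda>x. 1 - x\<^sup>2/2 + x^4/24 - cos x"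
  have "\<And>u. \<lbrakk>0 \<le> u; u \<le> x\<rbrakk> \<Longrightarrow> (?f has_real_derivative sin u - u + u^3/6) (at u)"
    by (auto intro!: derivative_eq_intros simp: field_simps power2_eq_square)
  moreover have "\<And>u. \<lbrakk>0 \<le> u; u \<le> x\<rbrakk> \<Longrightarrow> 0 \<le> sin u - u + u^3/6" using sin_ge_cubic by force
  ultimately have "?f x \<ge> ?f 0"
    by (intro DERIV_nonneg_imp_nondecreasing [OF assms]) blast
  then show ?thesis by simp
qed

lemma cos_le_quart: fixes x::real shows "cos x \<le> 1 - x\<^sup>2/2 + x^4/24"
  using cos_le_quart0[of "\<bar>x\<bar>"] by (simp add: power_even_abs_numeral)

lemma pi_sq_le: "pi\<^sup>2 \<le> 10"
proof -
  have "pi \<le> 3.1415926535899" by (rule pi_approx(2))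
  hence "pi * pi \<le> 3.1415926535899 * 3.1415926535899" by (intro mult_mono) auto
  thus ?thesis by (simp add: power2_eq_square)
qed

lemma cmod_cis_minus1_sq: "(cmod (cis y - 1))\<^sup>2 = 2 - 2 * cos y"
proof -
  have "(cmod (cis y - 1))\<^sup>2 = (cos y - 1)\<^sup>2 + (sin y)\<^sup>2"
    by (simp add: cmod_power2)
  also have "\<dots> = 2 - 2 * cos y"
    using sin_cos_squared_add[of y] by (simp add: power2_eq_square algebra_simps)
  finally show ?thesis .
qed

lemma chord_bound: fixes y::real assumes "\<bar>y\<bar> \<le> pi" shows "\<bar>y\<bar> \<le> 3 * cmod (cis y - 1)"
proof -
  have y2: "y\<^sup>2 \<le> 10" using pi_sq_le assms
    by (metis abs_ge_zero order_trans power2_abs power_mono)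
  have "y^4 = y\<^sup>2 * y\<^sup>2" by (simp add: power2_eq_square power4_eq_xxxx mult.assoc)
  have "y^4 \<le> 10 * y\<^sup>2" unfolding \<open>y^4 = y\<^sup>2 * y\<^sup>2\<close> using y2 by (intro mult_right_mono) auto
  moreover have "24 * cos y \<le> 24 - 12 * y\<^sup>2 + y^4" using cos_le_quart[of y] by (simp add: field_simps)
  ultimately have "y\<^sup>2 + 18 * cos y \<le> 18" using zero_le_power2[of y] by linarith
  hence "y\<^sup>2 \<le> 9 * (2 - 2 * cos y)" by (simp add: algebra_simps)
  hence "\<bar>y\<bar>\<^sup>2 \<le> (3 * cmod (cis y - 1))\<^sup>2"
    by (simp add: cmod_cis_minus1_sq power_mult_distrib)
  thus ?thesis by (rule power2_le_imp_le) simp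
qed



lemma core_geom:
  fixes c lam0 :: complex and r t s :: real and m :: nat
  assumes c1: "cmod c = 1" and l1: "cmod lam0 = 1" and r0: "0 < r" and r1: "r \<le> 1" and m1: "m \<ge> 1"
    and st: "s \<ge> \<bar>t\<bar> ^ m"
    and far: "3 * r powr (1 / real m) \<le> cmod (c - lam0)"
  shows "r \<le> cmod (c - (lam0 + (complex_of_real t + \<i> * complex_of_real s) * (- \<i> * lam0)))"
proof -
  define lam where "lam = lam0 + (complex_of_real t + \<i> * complex_of_real s) * (- \<i> * lam0)"
  have lam_eq: "lam = lam0 * Complex (1 + s) (- t)"
    unfolding lam_def by (simp add: complex_eq_iff algebra_simps)
  have s0: "s \<ge> 0" using st by (metis abs_ge_zero order_trans zero_le_power)
  have "cmod lam = cmod (Complex (1 + s) (- t))" using l1 by (simp add: lam_eq norm_mult)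
  also have "\<dots> \<ge> 1 + s" using abs_Re_le_cmod[of "Complex (1 + s) (- t)"] s0 by simp
  finally have lamb: "cmod lam \<ge> 1 + s" .
  define \<rho> where "\<rho> = r powr (1 / real m)"
  have rho0: "\<rho> > 0" unfolding \<rho>_def using r0 by simp
  have rrho: "r \<le> \<rho>" unfolding \<rho>_def using powr_mono'[of "1 / real m" 1 r] r0 r1 m1 by simp
  show ?thesis
  proof (cases "s \<ge> r")
    case True
    have "cmod lam - cmod c \<le> cmod (c - lam)"
      by (metis norm_minus_commute norm_triangle_ineq2)
    then show ?thesis using lamb c1 True unfolding lam_def by linarith
  next
    case False
    have ta: "\<bar>t\<bar> < \<rho>"
    proof (cases "t = 0")
      case True then show ?thesis using rho0 by simp
    next
      case False
      have "\<bar>t\<bar> = (\<bar>t\<bar> ^ m) powr (1 / real m)"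
        using False m1 by (simp add: powr_realpow[symmetric] powr_powr)
      also have "\<dots> < r powr (1 / real m)"
        using \<open>\<not> r \<le> s\<close> st m1 by (intro powr_less_mono2) auto
      finally show ?thesis unfolding \<rho>_def .
    qed
    have "lam - lam0 = lam0 * Complex s (- t)" by (simp add: lam_eq complex_eq_iff algebra_simps)
    hence "cmod (lam - lam0) = cmod (Complex s (- t))" using l1 by (simp add: norm_mult)
    also have "\<dots> \<le> \<bar>s\<bar> + \<bar>t\<bar>" using cmod_le[of "Complex s (- t)"] by simp
    finally have "cmod (lam - lam0) < 2 * \<rho>" using ta False s0 rrho by linarith
    moreover have "cmod (c - lam0) - cmod (lam - lam0) \<le> cmod (c - lam)"
      using norm_triangle_ineq4[of "c - lam" "lam0 - lam"] by (simp add: norm_minus_commute)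
    ultimately show ?thesis using far rrho unfolding lam_def \<rho>_def by linarith
  qed
qed

lemma l1norm_ge1: fixes k :: "int ^ 'd" assumes "k \<noteq> 0" shows "l1norm k \<ge> 1"
proof -
  obtain i where i: "k $ i \<noteq> 0" using assms by (metis vec_eq_iff zero_index)
  have "1 \<le> real_of_int \<bar>k $ i\<bar>" using i by simp
  also have "\<dots> \<le> l1norm k" unfolding l1norm_def
    by (rule member_le_sum) auto
  finally show ?thesis .
qed

lemma accessible:
  fixes w :: "real ^ 'd" and \<sigma> A :: real and m :: nat and lam0 :: complex
  assumes l1: "cmod lam0 = 1" and A1: "A \<ge> 1" and m1: "m \<ge> 1" and sig: "\<sigma> \<ge> 0"
    and good: "\<And>k. k \<noteq> 0 \<Longrightarrow>
       3 * (1 / (A * l1norm k powr \<sigma>)) powr (1 / real m) \<le> cmod (cis (2 * pi * kdot k w) - lam0)"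
  shows "tang_accessible m (Upsilon A w \<sigma>) lam0"
  unfolding tang_accessible_def
proof (intro exI conjI)
  show "cmod (- \<i> * lam0) = 1" using l1 by (simp add: norm_mult)
  show "(1::real) > 0" "(1::real) > 0" by auto
  show "{lam0 + (complex_of_real t + \<i> * complex_of_real s) * (- \<i> * lam0) | t s.
            \<bar>t\<bar> < 1 \<and> \<bar>s\<bar> < 1 \<and> s \<ge> 1 * \<bar>t\<bar> ^ m} \<subseteq> Upsilon A w \<sigma>"
  proof safe
    fix t s :: real assume st: "s \<ge> 1 * \<bar>t\<bar> ^ m"
    define lam where "lam = lam0 + (complex_of_real t + \<i> * complex_of_real s) * (- \<i> * lam0)"
    have "nu_lam lam w \<sigma> \<le> ereal A"
      unfolding nu_lam_def
    proof (rule SUP_least)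
      fix k :: "int ^ 'd" assume "k \<in> {k. k \<noteq> 0}"
      hence k0: "k \<noteq> 0" by simp
      define L where "L = l1norm k powr \<sigma>"
      have L1: "L \<ge> 1" unfolding L_def using l1norm_ge1[OF k0] sig ge_one_powr_ge_zero by blast
      define r where "r = 1 / (A * L)"
      have r0: "r > 0" and r1: "r \<le> 1" unfolding r_def using A1 L1 
        by (auto simp: field_simps intro: order_trans[of 1 A "A * L"])
      have "r \<le> cmod (cis (2 * pi * kdot k w) - lam)"
        unfolding lam_def
        by (rule core_geom[OF _ l1 r0 r1 m1]) (use st good[OF k0] in \<open>auto simp: r_def L_def\<close>)
      moreover have "exp (complex_of_real (2 * pi * kdot k w) * \<i>) = cis (2 * pi * kdot k w)"
        by (simp add: cis_conv_exp mult.commute)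
      ultimately have z: "r \<le> cmod (exp (complex_of_real (2 * pi * kdot k w) * \<i>) - lam)" by simp
      define z where "z = cmod (exp (complex_of_real (2 * pi * kdot k w) * \<i>) - lam)"
      have "z > 0" using z r0 unfolding z_def by linarith
      moreover have "1 / (z * l1norm k powr \<sigma>) \<le> A"
      proof -
        have "1 / (A * L) \<le> z" using z unfolding z_def r_def .
        hence "1 \<le> z * (A * L)" using A1 L1 by (simp add: field_simps)
        thus ?thesis using \<open>z > 0\<close> A1 L1 unfolding L_def[symmetric] by (simp add: field_simps)
      qed
      ultimately show "(let z = cmod (exp (complex_of_real (2 * pi * kdot k w) * \<i>) - lam)
         in if z = 0 then \<infinity> else ereal (1 / (z * l1norm k powr \<sigma>))) \<le> ereal A"
        unfolding z_def[symmetric] Let_def by simp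
    qed
    thus "lam0 + (complex_of_real t + \<i> * complex_of_real s) * (- \<i> * lam0) \<in> Upsilon A w \<sigma>"
      unfolding Upsilon_def lam_def by simp
  qed
qed



lemma g_nat_summable:
  fixes q :: real assumes q: "q > 1"
  shows "(\<lambda>n::nat. 1 / (1 + real n) powr q) abs_summable_on UNIV"
proof -
  have "summable (\<lambda>n::nat. real n powr (-q))" using q summable_real_powr_iff by simp
  hence "summable (\<lambda>n::nat. real (Suc n) powr (-q))" by (subst summable_Suc_iff)
  moreover have "real (Suc n) powr (-q) = norm (1 / (1 + real n) powr q)" for n
    by (simp add: powr_minus_divide add.commute)
  ultimately show ?thesis unfolding abs_summable_on_nat_iff' by simp
qed

lemma g_int_summable:
  fixes q :: real assumes q: "q > 1"
  shows "(\<lambda>n::int. 1 / (1 + real_of_int \<bar>n\<bar>) powr q) abs_summable_on UNIV"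
proof -
  let ?g = "\<lambda>n::int. 1 / (1 + real_of_int \<bar>n\<bar>) powr q"
  have 1: "?g abs_summable_on (int ` UNIV)"
    by (rule abs_summable_on_reindex) (use g_nat_summable[OF q] in simp)
  have "(\<lambda>n::nat. ?g (- int n)) abs_summable_on UNIV"
    using g_nat_summable[OF q] by simp
  hence 2: "?g abs_summable_on ((\<lambda>n. - int n) ` UNIV)"
    by (rule abs_summable_on_reindex)
  have "UNIV = int ` UNIV \<union> (\<lambda>n. - int n) ` UNIV"
  proof -
    { fix x :: int have "x \<in> int ` UNIV \<union> (\<lambda>n. - int n) ` UNIV"
        by (cases "x \<ge> 0") (auto intro: image_eqI[of _ _ "nat x"] image_eqI[of _ _ "nat (-x)"]) }
    thus ?thesis by auto
  qed
  with 1 2 show ?thesis by (metis abs_summable_on_union)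
qed

lemma prod_summable:
  fixes q :: real assumes q: "q > 1"
  shows "(\<lambda>k::int ^ 'd. \<Prod>i\<in>UNIV. 1 / (1 + real_of_int \<bar>k $ i\<bar>) powr q) abs_summable_on UNIV"
proof -
  let ?g = "\<lambda>n::int. 1 / (1 + real_of_int \<bar>n\<bar>) powr q"
  have "(\<lambda>p. \<Prod>i\<in>UNIV. ?g (p i)) abs_summable_on PiE (UNIV :: 'd set) (\<lambda>_. UNIV)"
    by (rule abs_summable_on_prod_PiE) (use g_int_summable[OF q] in auto)
  also have "PiE (UNIV :: 'd set) (\<lambda>_. UNIV :: int set) = range vec_nth"
    by (auto simp: PiE_UNIV_domain intro!: image_eqI[of _ _ "vec_lambda _"])
  finally have "(\<lambda>p. \<Prod>i\<in>UNIV. ?g (p i)) abs_summable_on range (vec_nth :: int ^ 'd \<Rightarrow> 'd \<Rightarrow> int)" .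
  note this1 = this
  have "(\<lambda>k::int^'d. (\<lambda>p. \<Prod>i\<in>UNIV. ?g (p i)) (vec_nth k)) abs_summable_on UNIV"
  proof -
    have "inj (vec_nth :: int ^ 'd \<Rightarrow> 'd \<Rightarrow> int)" by (auto simp: inj_on_def vec_eq_iff)
    from abs_summable_on_reindex_iff[OF this, of "\<lambda>p. \<Prod>i\<in>UNIV. ?g (p i)"] this1 show ?thesis by simp
  qed
  thus ?thesis by simp
qed



lemma cis_int: "cis (2 * pi * real_of_int j) = 1"
  by (simp add: cis.ctr complex_eq_iff)

lemma bad_in_int:
  fixes a \<theta> \<rho> :: real
  assumes th: "\<theta> \<in> {0..<2*pi}" and close: "cmod (cis a - cis \<theta>) < \<rho>"
  shows "\<exists>j\<in>{-1,0,1::int}. \<theta> \<in> {a - 2*pi*\<lfloor>a/(2*pi)\<rfloor> + 2*pi*j - 3*\<rho> <..< a - 2*pi*\<lfloor>a/(2*pi)\<rfloor> + 2*pi*j + 3*\<rho>}"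
proof -
  define n where "n = \<lfloor>a/(2*pi)\<rfloor>"
  define a' where "a' = a - 2*pi*n"
  have "real_of_int n \<le> a/(2*pi)" "a/(2*pi) < real_of_int n + 1" unfolding n_def by linarith+
  hence a'0: "0 \<le> a'" and a'1: "a' < 2*pi" unfolding a'_def by (simp_all add: field_simps)
  have ca: "cis a = cis a'"
  proof -
    have "cis a = cis (a' + 2*pi*real_of_int n)" unfolding a'_def by simp
    also have "\<dots> = cis a' * cis (2*pi*real_of_int n)" by (rule cis_mult[symmetric])
    finally show ?thesis by (simp add: cis_int)
  qed
  define x where "x = \<theta> - a'"
  have x1: "-2*pi < x" "x < 2*pi" using th a'0 a'1 unfolding x_def by auto
  obtain j :: int where j: "j \<in> {-1,0,1}" "\<bar>x - 2*pi*j\<bar> \<le> pi"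
  proof (cases "x > pi")
    case True thus ?thesis using that[of 1] x1 by auto
  next
    case False
    show ?thesis
    proof (cases "x < -pi")
      case True thus ?thesis using that[of "-1"] x1 by auto
    next
      case False thus ?thesis using that[of 0] \<open>\<not> x > pi\<close> by auto
    qed
  qed
  define y where "y = x - 2*pi*j"
  have "cis a' * cis y * cis (2*pi*real_of_int j) = cis (a' + y + 2*pi*real_of_int j)"
    by (simp only: cis_mult)
  moreover have "a' + y + 2*pi*real_of_int j = \<theta>" unfolding y_def x_def by simp
  ultimately have "cis \<theta> = cis a' * cis y * cis (2*pi*real_of_int j)" by simp
  hence "cis \<theta> = cis a' * cis y" by (simp add: cis_int)
  hence "cis a - cis \<theta> = - cis a' * (cis y - 1)" using ca by (simp add: algebra_simps)
  hence "cmod (cis a - cis \<theta>) = cmod (cis y - 1)" by (simp add: norm_mult)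
  hence "\<bar>y\<bar> < 3 * \<rho>" using chord_bound[of y] j(2) close unfolding y_def by linarith
  hence "\<theta> \<in> {a' + 2*pi*j - 3*\<rho> <..< a' + 2*pi*j + 3*\<rho>}" unfolding y_def x_def by auto
  with j show ?thesis unfolding a'_def n_def by blast
qed



lemma F_bound:
  fixes k :: "int ^ 'd" and q :: real
  assumes k0: "k \<noteq> 0" and q: "q \<ge> 0"
  shows "1 / (l1norm k powr (q * CARD('d))) \<le> 2 powr (q * CARD('d)) * (\<Prod>i\<in>UNIV. 1 / (1 + real_of_int \<bar>k $ i\<bar>) powr q)"
proof -
  define L where "L = l1norm k"
  define p where "p = q * CARD('d)"
  have L1: "L \<ge> 1" unfolding L_def by (rule l1norm_ge1[OF k0])
  have ki: "real_of_int \<bar>k $ i\<bar> \<le> L" for i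
    unfolding L_def l1norm_def by (rule member_le_sum) auto
  define P where "P = (\<Prod>i\<in>UNIV. (1 + real_of_int \<bar>k $ i\<bar>) powr q)"
  have P0: "P > 0" unfolding P_def by (intro prod_pos) auto
  have "P \<le> (\<Prod>i\<in>(UNIV::'d set). (2 * L) powr q)"
  proof -
    have ki2: "1 + real_of_int \<bar>k $ i\<bar> \<le> 2 * L" for i using ki[of i] L1 by linarith
    show ?thesis unfolding P_def by (intro prod_mono conjI powr_mono2) (use ki2 q in auto)
  qed
  also have "\<dots> = ((2 * L) powr q) ^ CARD('d)" by simp
  also have "\<dots> = (2 * L) powr p" unfolding p_def using L1 by (subst powr_power) (auto simp: mult.commute)
  also have "\<dots> = 2 powr p * L powr p" using L1 by (simp add: powr_mult)
  finally have PL: "P \<le> 2 powr p * L powr p" .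
  have eq: "(\<Prod>i\<in>UNIV. 1 / (1 + real_of_int \<bar>k $ i\<bar>) powr q) = 1 / P"
    unfolding P_def by (simp add: prod_dividef)
  have Lp: "L powr p > 0" using L1 by simp
  show ?thesis unfolding eq p_def[symmetric] L_def[symmetric]
    using PL P0 Lp by (simp add: field_simps)
qed

lemma K_enum:
  fixes q :: real
  defines "K \<equiv> {k :: int ^ 'd. k \<noteq> 0}"
  shows "bij_betw (from_nat_into K) UNIV K"
proof (rule bij_betw_from_nat_into)
  show "countable K" by (rule countable_subset[OF _ countableI_type[of "UNIV :: (int^'d) set"]]) auto
  have "inj (\<lambda>n::nat. (\<chi> i::'d. int n + 1))" by (auto simp: inj_on_def vec_eq_iff)
  hence "infinite (range (\<lambda>n::nat. (\<chi> i::'d. int n + 1)))" by (rule range_inj_infinite)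
  moreover have "range (\<lambda>n::nat. (\<chi> i::'d. int n + 1)) \<subseteq> K"
    unfolding K_def by (auto simp: vec_eq_iff)
  ultimately show "infinite K" using finite_subset by blast
qed

lemma F_summable:
  fixes p :: real
  assumes p: "p > real CARD('d)"
  shows "summable (\<lambda>n. 1 / (l1norm (from_nat_into {k :: int ^ 'd. k \<noteq> 0} n) powr p))"
proof -
  define K where "K = {k :: int ^ 'd. k \<noteq> 0}"
  define q where "q = p / CARD('d)"
  have q1: "q > 1" unfolding q_def using p by (simp add: field_simps)
  have pq: "p = q * CARD('d)" unfolding q_def by simp
  let ?G = "\<lambda>k::int^'d. 2 powr p * (\<Prod>i\<in>UNIV. 1 / (1 + real_of_int \<bar>k $ i\<bar>) powr q)"
  have "?G abs_summable_on UNIV"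
    by (rule abs_summable_on_cmult_right) (rule prod_summable[OF q1])
  hence G: "?G abs_summable_on K" by (rule abs_summable_on_subset) simp
  have "(\<lambda>k. 1 / (l1norm k powr p)) abs_summable_on K"
  proof (rule abs_summable_on_comparison_test'[OF G])
    fix k assume "k \<in> K"
    hence k0: "k \<noteq> 0" unfolding K_def by simp
    have "l1norm k \<ge> 1" by (rule l1norm_ge1[OF k0])
    hence "norm (1 / (l1norm k powr p)) = 1 / (l1norm k powr p)" by simp
    thus "norm (1 / (l1norm k powr p)) \<le> ?G k" using F_bound[OF k0, of q] q1 unfolding pq by simp
  qed
  hence "(\<lambda>n. 1 / (l1norm (from_nat_into K n) powr p)) abs_summable_on UNIV"
    using abs_summable_on_reindex_bij_betw[OF K_enum[where 'd='d], where f="\<lambda>k. 1 / (l1norm k powr p)"] unfolding K_def by simp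
  hence "summable (\<lambda>n. norm (1 / (l1norm (from_nat_into K n) powr p)))"
    by (simp add: abs_summable_on_nat_iff')
  thus ?thesis unfolding K_def by simp
qed



lemma emeasure_B:
  fixes c R :: real assumes R: "R \<ge> 0"
  shows "emeasure lborel ({c - 2*pi - R<..<c - 2*pi + R} \<union> {c - R<..<c + R} \<union> {c + 2*pi - R<..<c + 2*pi + R})
     \<le> ennreal (6 * R)"
proof -
  have "emeasure lborel ({c - 2*pi - R<..<c - 2*pi + R} \<union> {c - R<..<c + R} \<union> {c + 2*pi - R<..<c + 2*pi + R})
     \<le> emeasure lborel ({c - 2*pi - R<..<c - 2*pi + R} \<union> {c - R<..<c + R}) + emeasure lborel {c + 2*pi - R<..<c + 2*pi + R}"
    by (rule emeasure_subadditive) auto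
  also have "\<dots> \<le> (emeasure lborel {c - 2*pi - R<..<c - 2*pi + R} + emeasure lborel {c - R<..<c + R}) + emeasure lborel {c + 2*pi - R<..<c + 2*pi + R}"
    by (intro add_mono emeasure_subadditive) auto
  also have "\<dots> = ennreal (2*R) + ennreal (2*R) + ennreal (2*R)" using R by simp
  also have "\<dots> = ennreal (6 * R)" using R by (simp flip: ennreal_plus)
  finally show ?thesis .
qed

lemma part2:
  fixes w :: "real ^ 'd" and \<sigma> \<eta> :: real and m :: nat
  assumes m1: "m \<ge> 1" and sig: "\<sigma> > real m * real CARD('d)" and eta: "\<eta> > 0"
  shows "\<exists>A\<ge>1. \<exists>S \<in> sets lebesgue.
            {\<theta> \<in> {0..<2*pi}. \<not> tang_accessible m (Upsilon A w \<sigma>) (cis \<theta>)} \<subseteq> S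
            \<and> emeasure lebesgue S < ennreal \<eta>"
proof -
  define K where "K = {k :: int ^ 'd. k \<noteq> 0}"
  define e where "e = from_nat_into K"
  have bij: "bij_betw e UNIV K" unfolding e_def K_def by (rule K_enum)
  define p where "p = \<sigma> / real m"
  have mpos: "real m > 0" using m1 by simp
  have p: "p > real CARD('d)" unfolding p_def using sig mpos by (simp add: field_simps)
  have sig0: "\<sigma> \<ge> 0" using sig by (smt (verit) of_nat_0_le_iff mult_nonneg_nonneg)
  define F where "F n = 1 / (l1norm (e n) powr p)" for n
  have Fs: "summable F" unfolding F_def e_def K_def using F_summable[OF p] by simp
  have F0: "F n \<ge> 0" for n unfolding F_def by simp
  define T where "T = suminf F"
  have T0: "T \<ge> 0" unfolding T_def using Fs F0 by (simp add: suminf_nonneg)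
  define x where "x = 54 * T / \<eta> + 1"
  have x1: "x \<ge> 1" unfolding x_def using T0 eta by simp
  define A where "A = x powr real m"
  have A1: "A \<ge> 1" unfolding A_def using x1 by (simp add: ge_one_powr_ge_zero)
  have Ax: "A powr (1 / real m) = x" unfolding A_def using x1 mpos by (simp add: powr_powr)
  define c where "c k = 2*pi*kdot k w - 2*pi*\<lfloor>2*pi*kdot k w/(2*pi)\<rfloor>" for k
  define R where "R n = 9 * F n / x" for n
  have R0: "R n \<ge> 0" for n unfolding R_def using F0 x1 by simp
  define B where "B n = {c (e n) - 2*pi - R n<..<c (e n) - 2*pi + R n} \<union> {c (e n) - R n<..<c (e n) + R n}
     \<union> {c (e n) + 2*pi - R n<..<c (e n) + 2*pi + R n}" for n
  define S where "S = (\<Union>n. B n)"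
  have Sopen: "open S" unfolding S_def B_def by (intro open_UN ballI open_Un) auto
  hence Sborel: "S \<in> sets lborel" by simp
  show ?thesis
  proof (intro exI conjI bexI)
    show "A \<ge> 1" by (fact A1)
    show "S \<in> sets lebesgue" using Sborel by simp
    show "{\<theta> \<in> {0..<2*pi}. \<not> tang_accessible m (Upsilon A w \<sigma>) (cis \<theta>)} \<subseteq> S"
    proof safe
      fix \<theta> :: real assume th: "\<theta> \<in> {0..<2*pi}" and nacc: "\<not> tang_accessible m (Upsilon A w \<sigma>) (cis \<theta>)"
      obtain k :: "int ^ 'd" where k0: "k \<noteq> 0" and
        close: "cmod (cis (2 * pi * kdot k w) - cis \<theta>) < 3 * (1 / (A * l1norm k powr \<sigma>)) powr (1 / real m)"
        using accessible[of "cis \<theta>" A m \<sigma> w] A1 m1 sig0 nacc by (force simp: not_le)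
      obtain n where kn: "k = e n" using bij k0 unfolding K_def bij_betw_def by auto
      have L1: "l1norm k \<ge> 1" by (rule l1norm_ge1[OF k0])
      have "(1 / (A * l1norm k powr \<sigma>)) powr (1 / real m) = 1 / (x * l1norm k powr p)"
        using A1 L1 mpos by (simp add: powr_divide powr_mult powr_powr Ax p_def)
      hence eq: "3 * (3 * (1 / (A * l1norm k powr \<sigma>)) powr (1 / real m)) = R n"
        unfolding R_def F_def kn by simp
      from bad_in_int[OF th close] obtain j :: int where j: "j \<in> {-1,0,1}" and
        jin: "\<theta> \<in> {c k + 2*pi*j - R n <..< c k + 2*pi*j + R n}"
        unfolding eq c_def by blast
      have "\<theta> \<in> B n" using j jin unfolding B_def kn by auto
      thus "\<theta> \<in> S" unfolding S_def by blast
    qed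
    have "emeasure lebesgue S = emeasure lborel S" using Sborel by simp
    also have "\<dots> \<le> (\<Sum>n. emeasure lborel (B n))" unfolding S_def
      by (rule emeasure_subadditive_countably) (auto simp: B_def)
    also have "\<dots> \<le> (\<Sum>n. ennreal ((54 / x) * F n))"
    proof (rule suminf_le)
      fix n show "emeasure lborel (B n) \<le> ennreal ((54 / x) * F n)"
        using emeasure_B[OF R0[of n], of "c (e n)"] unfolding B_def R_def by simp
    qed auto
    also have "\<dots> = ennreal (\<Sum>n. (54 / x) * F n)"
      using Fs F0 x1 by (intro suminf_ennreal2 summable_mult) auto
    also have "(\<Sum>n. (54 / x) * F n) = 54 / x * T" unfolding T_def using Fs by (rule suminf_mult)
    also have "54 / x * T < \<eta>"
    proof -
      have "54 * T < \<eta> * x" unfolding x_def using eta by (simp add: field_simps)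
      thus ?thesis using x1 by (simp add: field_simps)
    qed
    hence "ennreal (54 / x * T) < ennreal \<eta>" using eta by (simp add: ennreal_lessI)
    finally show "emeasure lebesgue S < ennreal \<eta>" .
  qed
qed



lemma tang_mono: "C \<subseteq> D \<Longrightarrow> tang_accessible m C l \<Longrightarrow> tang_accessible m D l"
  unfolding tang_accessible_def by blast

theorem mainTheorem4:
  fixes w :: "real ^ 'd" and \<sigma> :: real and m :: nat
  assumes "m \<ge> 2"
    and "\<sigma> > real m * real CARD('d)"
    and "nu_omega w \<sigma> < \<infinity>"
  shows "(\<exists>N \<in> null_sets lebesgue.
            {\<theta> \<in> {0..<2*pi}. \<not> tang_accessible m (\<Union>A\<in>{A. A > 0}. Upsilon A w \<sigma>) (cis \<theta>)}
              \<subseteq> N)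
       \<and> (\<forall>\<eta> > 0. \<exists>A > 0. \<exists>S \<in> sets lebesgue.
            {\<theta> \<in> {0..<2*pi}. \<not> tang_accessible m (Upsilon A w \<sigma>) (cis \<theta>)} \<subseteq> S
            \<and> emeasure lebesgue S < ennreal \<eta>)"
proof
  have m1: "m \<ge> 1" using assms(1) by simp
  have P2: "\<And>\<eta>. \<eta> > 0 \<Longrightarrow> \<exists>A\<ge>1. \<exists>S \<in> sets lebesgue.
            {\<theta> \<in> {0..<2*pi}. \<not> tang_accessible m (Upsilon A w \<sigma>) (cis \<theta>)} \<subseteq> S
            \<and> emeasure lebesgue S < ennreal \<eta>"
    by (rule part2[OF m1 assms(2)])
  show "\<forall>\<eta> > 0. \<exists>A > 0. \<exists>S \<in> sets lebesgue.
            {\<theta> \<in> {0..<2*pi}. \<not> tang_accessible m (Upsilon A w \<sigma>) (cis \<theta>)} \<subseteq> S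
            \<and> emeasure lebesgue S < ennreal \<eta>"
  proof (intro allI impI)
    fix \<eta> :: real assume "\<eta> > 0"
    from P2[OF this] obtain A S where "A \<ge> 1" "S \<in> sets lebesgue"
      "{\<theta> \<in> {0..<2*pi}. \<not> tang_accessible m (Upsilon A w \<sigma>) (cis \<theta>)} \<subseteq> S"
      "emeasure lebesgue S < ennreal \<eta>" by blast
    thus "\<exists>A > 0. \<exists>S \<in> sets lebesgue.
            {\<theta> \<in> {0..<2*pi}. \<not> tang_accessible m (Upsilon A w \<sigma>) (cis \<theta>)} \<subseteq> S
            \<and> emeasure lebesgue S < ennreal \<eta>" by (intro exI[of _ A]) auto
  qed
  have "\<forall>n::nat. \<exists>AS. fst AS \<ge> 1 \<and> snd AS \<in> sets lebesgue \<and>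
            {\<theta> \<in> {0..<2*pi}. \<not> tang_accessible m (Upsilon (fst AS) w \<sigma>) (cis \<theta>)} \<subseteq> snd AS
            \<and> emeasure lebesgue (snd AS) < ennreal (1 / Suc n)"
  proof
    fix n :: nat
    from P2[of "1 / Suc n"] obtain A S where "A \<ge> 1" "S \<in> sets lebesgue"
      "{\<theta> \<in> {0..<2*pi}. \<not> tang_accessible m (Upsilon A w \<sigma>) (cis \<theta>)} \<subseteq> S"
      "emeasure lebesgue S < ennreal (1 / Suc n)" by auto
    thus "\<exists>AS. fst AS \<ge> 1 \<and> snd AS \<in> sets lebesgue \<and>
            {\<theta> \<in> {0..<2*pi}. \<not> tang_accessible m (Upsilon (fst AS) w \<sigma>) (cis \<theta>)} \<subseteq> snd AS
            \<and> emeasure lebesgue (snd AS) < ennreal (1 / Suc n)" by (intro exI[of _ "(A, S)"]) auto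
  qed
  hence "\<exists>AS. \<forall>n::nat. fst (AS n) \<ge> 1 \<and> snd (AS n) \<in> sets lebesgue \<and>
            {\<theta> \<in> {0..<2*pi}. \<not> tang_accessible m (Upsilon (fst (AS n)) w \<sigma>) (cis \<theta>)} \<subseteq> snd (AS n)
            \<and> emeasure lebesgue (snd (AS n)) < ennreal (1 / Suc n)" by (rule choice)
  then obtain AS :: "nat \<Rightarrow> real \<times> real set" where AS0: "\<forall>n. fst (AS n) \<ge> 1 \<and> snd (AS n) \<in> sets lebesgue \<and>
            {\<theta> \<in> {0..<2*pi}. \<not> tang_accessible m (Upsilon (fst (AS n)) w \<sigma>) (cis \<theta>)} \<subseteq> snd (AS n)
            \<and> emeasure lebesgue (snd (AS n)) < ennreal (1 / Suc n)"
    by (erule exE)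
  note AS = AS0[rule_format]
  define N where "N = (\<Inter>n. snd (AS n))"
  have Nsets: "N \<in> sets lebesgue" unfolding N_def using AS by auto
  have Nle: "emeasure lebesgue N \<le> emeasure lebesgue (snd (AS n))" for n
    unfolding N_def by (rule emeasure_mono) (use AS in auto)
  have "emeasure lebesgue N \<le> 0"
  proof (rule ennreal_le_epsilon)
    fix \<epsilon> :: real assume "\<epsilon> > 0"
    then obtain n :: nat where n: "1 / Suc n < \<epsilon>" using nat_approx_posE by blast
    have "emeasure lebesgue N < ennreal (1 / Suc n)" using Nle[of n] AS[of n] by (meson order_le_less_trans)
    also have "\<dots> \<le> ennreal \<epsilon>" using n by (intro ennreal_leI) simp
    finally show "emeasure lebesgue N \<le> 0 + ennreal \<epsilon>" by simp
  qed
  hence "N \<in> null_sets lebesgue" using Nsets by (intro null_setsI) simp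
  moreover have "{\<theta> \<in> {0..<2*pi}. \<not> tang_accessible m (\<Union>A\<in>{A. A > 0}. Upsilon A w \<sigma>) (cis \<theta>)} \<subseteq> N"
  proof (rule subsetI)
    fix \<theta> :: real assume "\<theta> \<in> {\<theta> \<in> {0..<2*pi}. \<not> tang_accessible m (\<Union>A\<in>{A. A > 0}. Upsilon A w \<sigma>) (cis \<theta>)}"
    hence th: "\<theta> \<in> {0..<2*pi}"
      and nacc: "\<not> tang_accessible m (\<Union>A\<in>{A. A > 0}. Upsilon A w \<sigma>) (cis \<theta>)" by auto
    show "\<theta> \<in> N" unfolding N_def
    proof (rule INT_I)
    fix n :: nat
    have "Upsilon (fst (AS n)) w \<sigma> \<subseteq> (\<Union>A\<in>{A. A > 0}. Upsilon A w \<sigma>)"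
    proof -
      have "fst (AS n) > 0" using AS[of n] by linarith
      thus ?thesis by blast
    qed
    hence "\<not> tang_accessible m (Upsilon (fst (AS n)) w \<sigma>) (cis \<theta>)" using nacc tang_mono by blast
    thus "\<theta> \<in> snd (AS n)" using AS[of n] th by blast
    qed
  qed
  ultimately show "\<exists>N \<in> null_sets lebesgue.
            {\<theta> \<in> {0..<2*pi}. \<not> tang_accessible m (\<Union>A\<in>{A. A > 0}. Upsilon A w \<sigma>) (cis \<theta>)}
              \<subseteq> N" by blast
qed


end
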